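(* Let $\delta,\ell,n\in\mathbb{Z}^+$ with $\ell\mid n$ and $2\delta<\ell\le n/2$. The redundancy $r_\delta(\ell,n)$ of any block-by-block decodable code $\mathcal{C}\subseteq\mathbb{F}_2^n$ that detects up to $\delta$ deletions per block satisfies $$r_\delta(\ell,n)\ge(2\delta+1)(n/\ell-1).$$
   Context: A binary string $\mathbf{x}\in\mathbb{F}_2^n$ with $\ell\mid n$ is viewed as a concatenation $\mathbf{x}=\langle\mathbf{x}^1,\dots,\mathbf{x}^{n/\ell}\rangle$ of blocks $\mathbf{x}^j=(x_{1+(j-1)\ell},\dots,x_{j\ell})\in\mathbb{F}_2^\ell$. A code $\mathcal{C}\subseteq\mathbb{F}_2^n$ detects up to $\delta$ deletions per block if there is a decoding function $\mathrm{Dec}:\mathbb{F}_2^*\to\mathbb{Z}_{\delta+1}^{n/\ell}$ such that for every $\mathbf{x}\in\mathcal{C}$ and every string $\mathbf{y}$ obtained from $\mathbf{x}$ by deleting at most $\delta$ bits from each block (worst case), $\mathrm{Dec}(\mathbf{y})=(\delta_1,\dots,\delta_{n/\ell})$ where $\delta_j$ is the exact number of bits deleted from block $\mathbf{x}^j$. Such a code is block-by-block decodable if, letting $\alpha_j$ be the starting position of block $j$ in $\mathbf{y}$ (with $\alpha_1=1$), there is a decoder which can output the exact number of deletions in any block $\mathbf{x}^j$ by only processing the bits $y_{\alpha_j},\dots,y_{\alpha_j+\ell-1}$. The redundancy of $\mathcal{C}$ is $n-\log_2|\mathcal{C}|$. *)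

theory Defs
  imports Complex_Main "HOL-Library.Sublist"
begin

text \<open>Binary strings are lists of booleans. Blocks are 0-indexed: block j (j < n div l)
  consists of positions j*l, ..., j*l + l - 1.\<close>

definition block :: "nat \<Rightarrow> bool list \<Rightarrow> nat \<Rightarrow> bool list" where
  "block l x j = take l (drop (j * l) x)"

text \<open>The received string is concat ys, and the number of deletions in block j is l - length (ys!j).\<close>

definition del_pattern :: "nat \<Rightarrow> nat \<Rightarrow> bool list \<Rightarrow> bool list list \<Rightarrow> bool" where
  "del_pattern l d x ys \<longleftrightarrow>
     length ys = length x div l \<and>
     (\<forall>j < length ys. subseq (ys ! j) (block l x j) \<and> l - length (ys ! j) \<le> d)"

definition del_counts :: "nat \<Rightarrow> bool list list \<Rightarrow> nat list" where
  "del_counts l ys = map (\<lambda>z. l - length z) ys"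

definition detects_deletions_per_block :: "nat \<Rightarrow> nat \<Rightarrow> bool list set \<Rightarrow> bool" where
  "detects_deletions_per_block l d C \<longleftrightarrow>
     (\<exists>Dec :: bool list \<Rightarrow> nat list. \<forall>x\<in>C. \<forall>ys. del_pattern l d x ys \<longrightarrow>
        Dec (concat ys) = del_counts l ys)"

definition block_start :: "bool list list \<Rightarrow> nat \<Rightarrow> nat" where
  "block_start ys j = sum_list (map length (take j ys))"

definition block_by_block_decodable :: "nat \<Rightarrow> nat \<Rightarrow> bool list set \<Rightarrow> bool" where
  "block_by_block_decodable l d C \<longleftrightarrow>
     (\<exists>D :: nat \<Rightarrow> bool list \<Rightarrow> nat. \<forall>x\<in>C. \<forall>ys. del_pattern l d x ys \<longrightarrow>
        (\<forall>j < length ys. D j (take l (drop (block_start ys j) (concat ys))) = l - length (ys ! j)))"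

definition redundancy :: "nat \<Rightarrow> bool list set \<Rightarrow> real" where
  "redundancy n C = real n - log 2 (real (card C))"

end

theory Submission
  imports Defs "HOL-Library.FuncSet"
begin

lemma block_len:
  assumes "length x = m * l" "j < m"
  shows "length (block l x j) = l"
proof -
  have "j * l + l \<le> m * l" using assms(2)
    by (metis add.commute mult_Suc less_eq_Suc_le mult_le_mono1)
  then show ?thesis using assms(1) by (simp add: block_def)
qed

lemma block_nth:
  assumes "length x = m * l" "j < m" "t < l"
  shows "block l x j ! t = x ! (j * l + t)"
  using assms by (simp add: block_def)

definition pat :: "nat \<Rightarrow> bool list \<Rightarrow> nat \<Rightarrow> nat \<Rightarrow> nat \<Rightarrow> bool list list" where
  "pat l x j k i = map (\<lambda>t. if t = j then take (l - k) (block l x t)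
      else if t = Suc j then drop i (block l x t) else block l x t) [0..<length x div l]"

lemma pat_del:
  assumes "length x = m * l" "0 < l" "k \<le> d" "i \<le> d"
  shows "del_pattern l d x (pat l x j k i)"
proof -
  have m: "length x div l = m" using assms by simp
  show ?thesis unfolding del_pattern_def pat_def m
    using block_len[OF assms(1)] assms(3,4) by (auto simp: take_is_prefix suffix_drop)
qed

lemma pat_start:
  assumes "length x = m * l" "0 < l" "Suc j < m"
  shows "block_start (pat l x j k i) j = j * l"
proof -
  have m: "length x div l = m" using assms by simp
  have "take j (pat l x j k i) = map (\<lambda>t. block l x t) [0..<j]"
    unfolding pat_def m using assms(3) by (simp add: take_map)
  moreover have "map length (map (\<lambda>t. block l x t) [0..<j]) = map (\<lambda>_. l) [0..<j]"
    using block_len[OF assms(1)] assms(3) by simp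
  ultimately show ?thesis unfolding block_start_def by (simp add: sum_list_triv del: map_map)
qed

lemma pat_window:
  assumes "length x = m * l" "0 < l" "Suc j < m" "k + i < l"
  shows "take l (drop (block_start (pat l x j k i) j) (concat (pat l x j k i)))
     = take (l - k) (block l x j) @ take k (drop i (block l x (Suc j)))"
proof -
  have m: "length x div l = m" using assms by simp
  define f where "f = (\<lambda>t. if t = j then take (l - k) (block l x t)
      else if t = Suc j then drop i (block l x t) else block l x t)"
  have up: "[0..<m] = [0..<j] @ [j, Suc j] @ [Suc (Suc j)..<m]"
  proof -
    have "[0..<m] = [0..<j] @ [j..<m]" using assms(3) upt_add_eq_append[of 0 j "m-j"] by simp
    also have "[j..<m] = j # Suc j # [Suc (Suc j)..<m]" using assms(3) by (simp add: upt_conv_Cons)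
    finally show ?thesis by simp
  qed
  have pre: "map f [0..<j] = map (block l x) [0..<j]" by (simp add: f_def)
  have lpre: "length (concat (map (block l x) [0..<j])) = j * l"
  proof -
    have "map length (map (block l x) [0..<j]) = map (\<lambda>_. l) [0..<j]"
      using block_len[OF assms(1)] assms(3) by simp
    then show ?thesis by (simp only: length_concat) (simp add: sum_list_triv del: map_map)
  qed
  have c: "concat (pat l x j k i) = concat (map (block l x) [0..<j]) @
      take (l - k) (block l x j) @ drop i (block l x (Suc j)) @ concat (map f [Suc (Suc j)..<m])"
    unfolding pat_def m f_def[symmetric] up map_append pre by (simp add: f_def)
  have L1: "length (block l x j) = l" "length (block l x (Suc j)) = l"
    using block_len[OF assms(1)] assms(3) by auto
  show ?thesis
    unfolding pat_start[OF assms(1-3)] c using lpre L1 assms(4) by simp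
qed


lemma dec:
  assumes D: "\<forall>x\<in>C. \<forall>ys. del_pattern l d x ys \<longrightarrow> (\<forall>j<length ys.
      D j (take l (drop (block_start ys j) (concat ys))) = l - length (ys ! j))"
    and x: "x \<in> C" "length x = m * l" and j: "Suc j < m" and ki: "k \<le> d" "i \<le> d"
    and dl: "2 * d < l"
  shows "D j (take (l - k) (block l x j) @ take k (drop i (block l x (Suc j)))) = k"
proof -
  have l0: "0 < l" using dl by simp
  have m: "length x div l = m" using x(2) l0 by simp
  have P: "del_pattern l d x (pat l x j k i)" using pat_del[OF x(2) l0 ki] .
  have len: "length (pat l x j k i) = m" unfolding pat_def m by simp
  have jl: "j < length (pat l x j k i)" using len j by simp
  have nth: "pat l x j k i ! j = take (l - k) (block l x j)"
    unfolding pat_def m using j by simp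
  have "D j (take l (drop (block_start (pat l x j k i) j) (concat (pat l x j k i))))
      = l - length (pat l x j k i ! j)"
    using D x(1) P jl by blast
  moreover have "length (pat l x j k i ! j) = l - k"
    unfolding nth using block_len[OF x(2)] j by simp
  moreover have "k + i < l" using ki dl by simp
  ultimately show ?thesis using pat_window[OF x(2) l0 j] ki dl by simp
qed

lemma listsB:
  fixes E :: "bool list \<Rightarrow> nat"
  assumes E: "\<And>k i. k \<le> d \<Longrightarrow> i \<le> d \<Longrightarrow> E (take (l - k) a @ take k (drop i b)) = k"
    and la: "length a = l" and lb: "length b = l" and dl: "2 * d < l" and d0: "0 < d"
    and t: "t \<le> d"
  shows "b ! t = (\<not> a ! (l - 1))"
proof (rule ccontr)
  assume H: "b ! t \<noteq> (\<not> a ! (l - 1))"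
  have tl: "t < l" using t dl by simp
  have "take 1 (drop t b) = [b ! t]" using tl lb by (simp add: Cons_nth_drop_Suc[symmetric])
  moreover have "take (l - 1) a @ [a ! (l - 1)] = a"
    using la dl by (metis Suc_pred' bot_nat_0.extremum_strict diff_less gr_zeroI lessI
        take_Suc_conv_app_nth take_all_iff order.refl zero_less_one)
  ultimately have "E a = 1" using E[of 1 t] d0 t H by simp
  moreover have "E a = 0" using E[of 0 0] la by simp
  ultimately show False by simp
qed

lemma listsR:
  fixes E :: "bool list \<Rightarrow> nat"
  assumes E: "\<And>k i. k \<le> d \<Longrightarrow> i \<le> d \<Longrightarrow> E (take (l - k) a @ take k (drop i b)) = k"
    and la: "length a = l" and lb: "length b = l" and dl: "2 * d < l" and d0: "0 < d"
    and k: "k \<le> d"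
  shows "take k b = replicate k (\<not> a ! (l - 1))"
proof (rule nth_equalityI)
  show "length (take k b) = length (replicate k (\<not> a ! (l - 1)))" using k dl lb by simp
  fix p assume "p < length (take k b)"
  then have "p < k" by simp
  then show "take k b ! p = replicate k (\<not> a ! (l - 1)) ! p"
    using listsB[OF E la lb dl d0, of p] k by simp
qed

lemma listsA:
  fixes E :: "bool list \<Rightarrow> nat"
  assumes E: "\<And>k i. k \<le> d \<Longrightarrow> i \<le> d \<Longrightarrow> E (take (l - k) a @ take k (drop i b)) = k"
    and la: "length a = l" and lb: "length b = l" and dl: "2 * d < l" and d0: "0 < d"
    and t: "t < d"
  shows "a ! (l - 1 - t) = a ! (l - 1)"
proof (rule ccontr)
  assume H: "a ! (l - 1 - t) \<noteq> a ! (l - 1)"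
  define c where "c = a ! (l - 1)"
  have H': "a ! (l - 1 - t) = (\<not> c)" using H c_def by auto
  have e1: "E (take (l - t) a @ take t b) = t" using E[of t 0] t by simp
  have e2: "E (take (l - Suc t) a @ take (Suc t) b) = Suc t" using E[of "Suc t" 0] t by simp
  have r1: "take t b = replicate t (\<not> c)" using listsR[OF E la lb dl d0, of t] t c_def by simp
  have r2: "take (Suc t) b = replicate (Suc t) (\<not> c)"
    using listsR[OF E la lb dl d0, of "Suc t"] t c_def by simp
  have tk: "take (l - t) a = take (l - Suc t) a @ [a ! (l - Suc t)]"
  proof -
    have "Suc (l - Suc t) = l - t" using t dl by simp
    moreover have "l - Suc t < length a" using la t dl by simp
    ultimately show ?thesis by (metis take_Suc_conv_app_nth)
  qed
  have "l - Suc t = l - 1 - t" by simp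
  then have "take (l - t) a @ take t b = take (l - Suc t) a @ take (Suc t) b"
    using tk r1 r2 H' by (simp add: replicate_append_same[symmetric])
  then show False using e1 e2 by simp
qed

lemma listsFull:
  fixes E :: "bool list \<Rightarrow> nat"
  assumes E: "\<And>k i. k \<le> d \<Longrightarrow> i \<le> d \<Longrightarrow> E (take (l - k) a @ take k (drop i b)) = k"
    and la: "length a = l" and lb: "length b = l" and dl: "2 * d < l" and d0: "0 < d"
  shows "a = take (l - d) a @ replicate d (a ! (l - 1))"
proof (rule nth_equalityI)
  show "length a = length (take (l - d) a @ replicate d (a ! (l - 1)))" using la dl by simp
  fix p assume p: "p < length a"
  show "a ! p = (take (l - d) a @ replicate d (a ! (l - 1))) ! p"
  proof (cases "p < l - d")
    case True then show ?thesis using la by (simp add: nth_append)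
  next
    case False
    define t where "t = l - 1 - p"
    have "t < d" "p = l - 1 - t" using False p la dl unfolding t_def by auto
    then show ?thesis using listsA[OF E la lb dl d0, of t] False la p by (simp add: nth_append)
  qed
qed

lemma listsC:
  fixes E :: "bool list \<Rightarrow> nat"
  assumes E: "\<And>k i. k \<le> d \<Longrightarrow> i \<le> d \<Longrightarrow> E (take (l - k) a @ take k (drop i b)) = k"
    and la: "length a = l" and lb: "length b = l"
    and E': "\<And>k i. k \<le> d \<Longrightarrow> i \<le> d \<Longrightarrow> E (take (l - k) a' @ take k (drop i b')) = k"
    and la': "length a' = l" and lb': "length b' = l"
    and dl: "2 * d < l" and d0: "0 < d"
    and eq: "take (l - d) a = take (l - d) a'"
  shows "a' ! (l - 1) = a ! (l - 1)"
proof (rule ccontr)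
  assume H: "a' ! (l - 1) \<noteq> a ! (l - 1)"
  have "E (take (l - d) a' @ take d (drop 0 b')) = d" using E'[of d 0] by simp
  moreover have "take d b' = replicate d (\<not> a' ! (l - 1))"
    using listsR[OF E' la' lb' dl d0, of d] by simp
  moreover have "(\<not> a' ! (l - 1)) = a ! (l - 1)" using H by auto
  ultimately have "E a = d" using listsFull[OF E la lb dl d0] eq by simp
  moreover have "E a = 0" using E[of 0 0] la by simp
  ultimately show False using d0 by simp
qed


lemma disj_aux:
  fixes j j' l d :: nat
  assumes "j < j'" "2 * d < l"
  shows "{Suc j * l - d..<Suc j * l + d + 1} \<inter> {Suc j' * l - d..<Suc j' * l + d + 1} = {}"
proof -
  have "Suc (Suc j) * l \<le> Suc j' * l"
    using assms(1) by (intro mult_le_mono1) simp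
  then have "Suc j * l + d + 1 \<le> Suc j' * l - d" using assms(2) by simp
  then show ?thesis by auto
qed

lemma card_bound:
  fixes d l m :: nat
  assumes dl: "2 * d < l"
  defines "Ds \<equiv> (\<Union>j\<in>{..<m - 1}. {Suc j * l - d..<Suc j * l + d + 1})"
  shows "card Ds = (m - 1) * (2 * d + 1)" "Ds \<subseteq> {..<m * l}" "finite Ds"
proof -
  have "card Ds = (\<Sum>j\<in>{..<m - 1}. card {Suc j * l - d..<Suc j * l + d + 1})"
    unfolding Ds_def
  proof (rule card_UN_disjoint)
    show "\<forall>i\<in>{..<m - 1}. \<forall>j\<in>{..<m - 1}. i \<noteq> j \<longrightarrow>
      {Suc i * l - d..<Suc i * l + d + 1} \<inter> {Suc j * l - d..<Suc j * l + d + 1} = {}"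
    proof (intro ballI impI)
      fix i j :: nat assume "i \<noteq> j"
      then show "{Suc i * l - d..<Suc i * l + d + 1} \<inter> {Suc j * l - d..<Suc j * l + d + 1} = {}"
      proof (cases "i < j")
        case True then show ?thesis using disj_aux[OF _ dl] by blast
      next
        case False then have "j < i" using \<open>i \<noteq> j\<close> by simp
        then show ?thesis using disj_aux[OF _ dl, of j i] by blast
      qed
    qed
  qed auto
  also have "\<dots> = (\<Sum>j\<in>{..<m - 1}. 2 * d + 1)"
  proof (rule sum.cong)
    fix j assume "j \<in> {..<m - 1}"
    have "d \<le> Suc j * l" using dl by (simp add: trans_le_add1)
    then show "card {Suc j * l - d..<Suc j * l + d + 1} = 2 * d + 1" by simp
  qed simp
  finally show "card Ds = (m - 1) * (2 * d + 1)" by simp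
  show "finite Ds" unfolding Ds_def by auto
  show "Ds \<subseteq> {..<m * l}"
  proof
    fix p assume "p \<in> Ds"
    then obtain j where j: "j < m - 1" "p < Suc j * l + d + 1" unfolding Ds_def by auto
    have "Suc (Suc j) * l \<le> m * l" using j(1) by (intro mult_le_mono1) simp
    then have "Suc j * l + l \<le> m * l" by simp
    then show "p \<in> {..<m * l}" using j(2) dl by simp
  qed
qed


theorem theorem3:
  fixes d l n :: nat and C :: "bool list set"
  assumes "d > 0" "l > 0" "n > 0"
    and "l dvd n" and "2 * d < l" and "2 * l \<le> n"
    and "\<forall>x\<in>C. length x = n"
    and "detects_deletions_per_block l d C"
    and "block_by_block_decodable l d C"
  shows "redundancy n C \<ge> real (2 * d + 1) * (real n / real l - 1)"
proof -
  note d0 = assms(1) and l0 = assms(2) and dl = assms(5)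
  obtain D :: "nat \<Rightarrow> bool list \<Rightarrow> nat" where D: "\<forall>x\<in>C. \<forall>ys. del_pattern l d x ys \<longrightarrow> (\<forall>j<length ys.
      D j (take l (drop (block_start ys j) (concat ys))) = l - length (ys ! j))"
    using assms(9) unfolding block_by_block_decodable_def by blast
  define m where "m = n div l"
  have nm: "n = m * l" using assms(4) unfolding m_def by simp
  have lenx: "\<And>x. x \<in> C \<Longrightarrow> length x = m * l" using assms(7) nm by simp
  have EE: "\<And>x j k i. x \<in> C \<Longrightarrow> Suc j < m \<Longrightarrow> k \<le> d \<Longrightarrow> i \<le> d \<Longrightarrow>
     D j (take (l - k) (block l x j) @ take k (drop i (block l x (Suc j)))) = k"
    using dec[OF D _ lenx _ _ _ dl] lenx by blast
  have lb: "\<And>x j. x \<in> C \<Longrightarrow> j < m \<Longrightarrow> length (block l x j) = l"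
    using block_len lenx by blast
  have bn: "\<And>x j t. x \<in> C \<Longrightarrow> j < m \<Longrightarrow> t < l \<Longrightarrow> block l x j ! t = x ! (j * l + t)"
    using block_nth lenx by blast
  have hA: "x ! (Suc j * l - 1 - t) = x ! (Suc j * l - 1)"
    if x: "x \<in> C" and j: "Suc j < m" and t: "t < d" for x j t
  proof -
    have "block l x j ! (l - 1 - t) = block l x j ! (l - 1)"
      using listsA[OF EE[OF x j] lb[OF x] lb[OF x j] dl d0 t] j by simp
    moreover have "j * l + (l - 1 - t) = Suc j * l - 1 - t" "j * l + (l - 1) = Suc j * l - 1"
      using t dl by simp_all
    ultimately show ?thesis using bn[OF x, of j] j t dl by simp
  qed
  have hB: "x ! (Suc j * l + t) = (\<not> x ! (Suc j * l - 1))"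
    if x: "x \<in> C" and j: "Suc j < m" and t: "t \<le> d" for x j t
  proof -
    have "block l x (Suc j) ! t = (\<not> block l x j ! (l - 1))"
      using listsB[OF EE[OF x j] lb[OF x] lb[OF x j] dl d0 t] j by simp
    moreover have "j * l + (l - 1) = Suc j * l - 1" using dl by simp
    ultimately show ?thesis using bn[OF x, of j] bn[OF x j, of t] j t dl by simp
  qed
  have hC: "x' ! (Suc j * l - 1) = x ! (Suc j * l - 1)"
    if x: "x \<in> C" and x': "x' \<in> C" and j: "Suc j < m"
      and eq: "\<And>p. j * l \<le> p \<Longrightarrow> p < Suc j * l - d \<Longrightarrow> x ! p = x' ! p" for x x' j
  proof -
    have "take (l - d) (block l x j) = take (l - d) (block l x' j)"
    proof (rule nth_equalityI)
      show "length (take (l - d) (block l x j)) = length (take (l - d) (block l x' j))"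
        using lb[OF x] lb[OF x'] j by simp
      fix p assume "p < length (take (l - d) (block l x j))"
      then have p: "p < l - d" using lb[OF x] j by simp
      have "x ! (j * l + p) = x' ! (j * l + p)" using eq[of "j * l + p"] p by simp
      then show "take (l - d) (block l x j) ! p = take (l - d) (block l x' j) ! p"
        using p bn[OF x, of j p] bn[OF x', of j p] j by simp
    qed
    then have "block l x' j ! (l - 1) = block l x j ! (l - 1)"
      using listsC[OF EE[OF x j] lb[OF x] lb[OF x j] EE[OF x' j] lb[OF x'] lb[OF x' j] dl d0] j
      by simp
    moreover have "j * l + (l - 1) = Suc j * l - 1" using dl by simp
    ultimately show ?thesis using bn[OF x, of j] bn[OF x', of j] j dl by simp
  qed
  define Ds where "Ds = (\<Union>j\<in>{..<m - 1}. {Suc j * l - d..<Suc j * l + d + 1})"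
  note cb = card_bound[OF dl, of m, folded Ds_def]
  define F where "F = {..<n} - Ds"
  have inj: "x = x'" if x: "x \<in> C" and x': "x' \<in> C" and eqF: "\<forall>p\<in>F. x ! p = x' ! p" for x x'
  proof -
    have "\<forall>p. p < n \<longrightarrow> x ! p = x' ! p"
    proof (intro allI)
      fix p show "p < n \<longrightarrow> x ! p = x' ! p"
      proof (induction p rule: less_induct)
        case (less p)
        show ?case
        proof
          assume pn: "p < n"
          show "x ! p = x' ! p"
          proof (cases "p \<in> Ds")
            case False then show ?thesis using eqF pn unfolding F_def by blast
          next
            case True
            then obtain j where j: "j < m - 1" "Suc j * l - d \<le> p" "p < Suc j * l + d + 1"
              unfolding Ds_def by auto
            have j': "Suc j < m" using j(1) by simp
            show ?thesis
            proof (cases "p < Suc j * l")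
              case True
              define t where "t = Suc j * l - 1 - p"
              have t: "t < d" "p = Suc j * l - 1 - t" using True j(2) d0 unfolding t_def by auto
              have "x' ! (Suc j * l - 1) = x ! (Suc j * l - 1)"
              proof (rule hC[OF x x' j'])
                fix q assume "j * l \<le> q" "q < Suc j * l - d"
                then show "x ! q = x' ! q" using less.IH[of q] j(2) pn by simp
              qed
              then show ?thesis using hA[OF x j' t(1)] hA[OF x' j' t(1)] t(2) by simp
            next
              case False
              define t where "t = p - Suc j * l"
              have t: "t \<le> d" "p = Suc j * l + t" using False j(3) unfolding t_def by auto
              have "x ! (Suc j * l - 1) = x' ! (Suc j * l - 1)"
                using less.IH[of "Suc j * l - 1"] False pn l0 by simp
              then show ?thesis using hB[OF x j' t(1)] hB[OF x' j' t(1)] t(2) by simp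
            qed
          qed
        qed
      qed
    qed
    then show ?thesis using x x' assms(7) by (intro nth_equalityI) auto
  qed
  define h where "h x = restrict (\<lambda>p. x ! p) F" for x :: "bool list"
  have finF: "finite F" unfolding F_def by simp
  have injh: "inj_on h C"
  proof (rule inj_onI)
    fix x x' assume "x \<in> C" "x' \<in> C" "h x = h x'"
    moreover have "\<forall>p\<in>F. x ! p = x' ! p"
    proof
      fix p assume "p \<in> F"
      then show "x ! p = x' ! p" using fun_cong[OF \<open>h x = h x'\<close>, of p] unfolding h_def by simp
    qed
    ultimately show "x = x'" using inj by blast
  qed
  have sub: "h ` C \<subseteq> PiE F (\<lambda>_. UNIV :: bool set)" unfolding h_def by auto
  have "card C = card (h ` C)" using card_image[OF injh] by simp
  also have "\<dots> \<le> card (PiE F (\<lambda>_. UNIV :: bool set))"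
    using sub by (intro card_mono) (simp_all add: finite_PiE finF)
  also have "\<dots> = 2 ^ card F" using card_PiE[OF finF, of "\<lambda>_. UNIV :: bool set"] by simp
  finally have cC: "card C \<le> 2 ^ card F" .
  have cF: "card F = n - (m - 1) * (2 * d + 1)"
    unfolding F_def using cb nm by (simp add: card_Diff_subset)
  have le1: "(m - 1) * (2 * d + 1) \<le> (m - 1) * l" using dl by (intro mult_le_mono2) simp
  have le2: "(m - 1) * l \<le> n" using nm by simp
  have rn: "real n / real l - 1 = real (m - 1)"
  proof -
    have "1 \<le> m" using assms(3) nm by (cases m) auto
    then show ?thesis using nm l0 by (simp add: of_nat_diff)
  qed
  have goal: "real ((m - 1) * (2 * d + 1)) \<le> real n - log 2 (real (card C))"
  proof (cases "card C = 0")
    case True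
    have "(m - 1) * (2 * d + 1) \<le> n" using le1 le2 by linarith
    then have "real ((m - 1) * (2 * d + 1)) \<le> real n" by (simp only: of_nat_le_iff)
    then show ?thesis using True by (simp add: log_def)
  next
    case False
    have "log 2 (real (card C)) \<le> log 2 (2 ^ card F)"
      using cC False by (subst log_le_cancel_iff) (auto simp del: of_nat_power simp add: of_nat_power[symmetric])
    also have "\<dots> = real (card F)" by (simp add: log_nat_power)
    finally show ?thesis using cF le1 le2 by (simp add: of_nat_diff)
  qed
  have "real ((m - 1) * (2 * d + 1)) = real (2 * d + 1) * real (m - 1)"
    by (simp only: of_nat_mult mult.commute)
  then show ?thesis unfolding redundancy_def rn using goal by linarith
qed

end
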